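(* Let $H\in\mathbb{R}^{N\times n}$ and $Y\in\mathbb{R}^{N\times k}$ with $H^TH$ positive definite, let $c\ge 0$ be an integer, and let $R\in\mathbb{R}^{n\times n}$ be symmetric positive semidefinite with $\rho(F(R))<1$, where $F(R):=R(H^TH+R)^{-1}$ and $\rho$ denotes the spectral radius. Define the high-order regularization solution $$\hat\beta_{hr}=(H^TH+R)^{-1}\sum_{i=0}^{c}F(R)^i\,H^TY,$$ the optimal solution $\beta_{opt}=H^{\dagger}Y=(H^TH)^{-1}H^TY$, and the error $e_\beta=\hat\beta_{hr}-\beta_{opt}$. Then $$\lim_{R\to O}\|e_\beta\|=0\quad\text{and}\quad \lim_{R\to O}\left\|(H^TH+R)^{-1}F(R)H^TY\right\|=0,$$ where $O$ is the zero matrix and the limit is over symmetric positive semidefinite $R$, and, for fixed such $R$, $$\lim_{c\to+\infty}\|e_\beta\|=0.$$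
   Context: $\|\cdot\|$ denotes the 2-norm (spectral norm for matrices). $H^{\dagger}$ is the Moore–Penrose pseudo-inverse. $R$ is called the regularization matrix and $c$ the regularization order. *)

theory Defs
  imports "HOL-Analysis.Analysis"
begin

definition spec_norm :: "real^'n^'m \<Rightarrow> real" where
  "spec_norm A = onorm (\<lambda>x. A *v x)"

primrec mpow :: "real^'n^'n \<Rightarrow> nat \<Rightarrow> real^'n^'n" where
  "mpow A 0 = mat 1"
| "mpow A (Suc i) = A ** mpow A i"

definition cplx_mat :: "real^'n^'n \<Rightarrow> complex^'n^'n" where
  "cplx_mat A = (\<chi> i j. complex_of_real (A $ i $ j))"

definition is_eigenvalue :: "real^'n^'n \<Rightarrow> complex \<Rightarrow> bool" where
  "is_eigenvalue A l \<longleftrightarrow> (\<exists>v. v \<noteq> 0 \<and> cplx_mat A *v v = l *s v)"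

definition spectral_radius :: "real^'n^'n \<Rightarrow> real" where
  "spectral_radius A = Sup {cmod l | l. is_eigenvalue A l}"

definition pos_def :: "real^'n^'n \<Rightarrow> bool" where
  "pos_def A \<longleftrightarrow> transpose A = A \<and> (\<forall>x. x \<noteq> 0 \<longrightarrow> x \<bullet> (A *v x) > 0)"

definition psd :: "real^'n^'n \<Rightarrow> bool" where
  "psd A \<longleftrightarrow> transpose A = A \<and> (\<forall>x. x \<bullet> (A *v x) \<ge> 0)"

definition Fmat :: "real^'n^'N \<Rightarrow> real^'n^'n \<Rightarrow> real^'n^'n" where
  "Fmat H R = R ** matrix_inv (transpose H ** H + R)"

definition beta_hr :: "real^'n^'N \<Rightarrow> real^'k^'N \<Rightarrow> real^'n^'n \<Rightarrow> nat \<Rightarrow> real^'k^'n" where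
  "beta_hr H Y R c = matrix_inv (transpose H ** H + R) **
      (\<Sum>i\<in>{0..c}. mpow (Fmat H R) i) ** (transpose H ** Y)"

definition beta_opt :: "real^'n^'N \<Rightarrow> real^'k^'N \<Rightarrow> real^'k^'n" where
  "beta_opt H Y = matrix_inv (transpose H ** H) ** (transpose H ** Y)"

end

theory Submission
  imports Defs
begin

lemma mm_add_r: "((A::real^'n^'m) + B) ** C = A ** C + B ** C"
  by (simp add: matrix_matrix_mult_def vec_eq_iff sum.distrib algebra_simps)

lemma mm_sub_r: "((A::real^'n^'m) - B) ** C = A ** C - B ** C"
  by (simp add: matrix_matrix_mult_def vec_eq_iff sum_subtractf algebra_simps)

lemma mm_sub_l: "(C::real^'n^'m) ** (A - B) = C ** A - C ** B"
  by (simp add: matrix_matrix_mult_def vec_eq_iff sum_subtractf algebra_simps)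

lemma transpose_add': "transpose ((A::real^'n^'m) + B) = transpose A + transpose B"
  by (simp add: transpose_def vec_eq_iff)

lemma inv_props:
  fixes X :: "real^'n^'n"
  assumes "invertible X"
  shows "matrix_inv X ** X = mat 1 \<and> X ** matrix_inv X = mat 1"
proof -
  from assms obtain X' where "X ** X' = mat 1 \<and> X' ** X = mat 1"
    unfolding invertible_def by blast
  then have "X ** matrix_inv X = mat 1 \<and> matrix_inv X ** X = mat 1"
    unfolding matrix_inv_def by (rule someI)
  then show ?thesis by blast
qed

lemma sym_inner:
  fixes S :: "real^'n^'n"
  assumes "transpose S = S"
  shows "x \<bullet> (S *v y) = y \<bullet> (S *v x)"
proof -
  have "x \<bullet> (S *v y) = (x v* S) \<bullet> y" by (simp add: dot_lmul_matrix)
  also have "x v* S = transpose S *v x" by simp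
  also have "\<dots> = S *v x" using assms by simp
  finally show ?thesis by (simp add: inner_commute)
qed

lemma sn_vec: "norm (X *v x) \<le> spec_norm X * norm x"
  unfolding spec_norm_def by (rule onorm[OF matrix_vector_mul_bounded_linear])

lemma sn_nonneg: "0 \<le> spec_norm X"
  unfolding spec_norm_def by (rule onorm_pos_le[OF matrix_vector_mul_bounded_linear])

lemma sn_mult: "spec_norm ((X::real^'n^'m) ** (Y::real^'k^'n)) \<le> spec_norm X * spec_norm Y"
proof -
  have "(\<lambda>x. (X ** Y) *v x) = (\<lambda>x. X *v x) \<circ> (\<lambda>x. Y *v x)"
    by (auto simp: matrix_vector_mul_assoc)
  then show ?thesis unfolding spec_norm_def
    by (metis onorm_compose matrix_vector_mul_bounded_linear)
qed

lemma sn_uminus: "spec_norm (- X) = spec_norm X"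
proof -
  have "(\<lambda>x. (- X) *v x) = (\<lambda>x. - (X *v x))"
    by (auto simp: vec_eq_iff matrix_vector_mult_def sum_negf)
  then show ?thesis unfolding spec_norm_def using onorm_neg by metis
qed

lemma sn_sum: "spec_norm (X::real^'n^'m) \<le> (\<Sum>i\<in>UNIV. \<Sum>j\<in>UNIV. \<bar>X $ i $ j\<bar>)"
  unfolding spec_norm_def by (rule onorm_le_matrix_component_sum)

lemma sn_mpow: "spec_norm (mpow X k) \<le> spec_norm X ^ k"
proof (induction k)
  case 0
  have "(\<lambda>x. (mat 1::real^'a^'a) *v x) = (\<lambda>x. x)" by auto
  then show ?case unfolding spec_norm_def mpow.simps power_0 by (simp only:) (rule onorm_id_le)
next
  case (Suc k)
  have "spec_norm (mpow X (Suc k)) \<le> spec_norm X * spec_norm (mpow X k)"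
    by (simp add: sn_mult)
  also have "\<dots> \<le> spec_norm X * spec_norm X ^ k"
    using Suc by (simp add: mult_left_mono sn_nonneg)
  finally show ?case by simp
qed

lemma posdef_bound:
  fixes A :: "real^'n^'n"
  assumes "pos_def A"
  shows "\<exists>\<mu>>0. \<forall>x. \<mu> * (norm x)^2 \<le> x \<bullet> (A *v x)"
proof -
  let ?f = "\<lambda>x. x \<bullet> (A *v x)"
  have cont: "continuous_on (sphere 0 1) ?f"
    by (intro continuous_intros linear_continuous_on matrix_vector_mul_bounded_linear)
  have ne: "sphere (0::real^'n) 1 \<noteq> {}" by simp
  obtain x0 where x0: "x0 \<in> sphere 0 1" "\<forall>y\<in>sphere 0 1. ?f x0 \<le> ?f y"
    using continuous_attains_inf[OF compact_sphere ne cont] by blast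
  have "x0 \<noteq> 0" using x0(1) by auto
  then have pos: "?f x0 > 0" using assms unfolding pos_def_def by blast
  have "\<forall>x. ?f x0 * (norm x)^2 \<le> ?f x"
  proof
    fix x :: "real^'n"
    show "?f x0 * (norm x)^2 \<le> ?f x"
    proof (cases "x = 0")
      case True then show ?thesis by simp
    next
      case False
      let ?u = "(1 / norm x) *\<^sub>R x"
      have "?u \<in> sphere 0 1" using False by simp
      then have "?f x0 \<le> ?f ?u" using x0 by blast
      also have "?f ?u = ?f x / (norm x)^2"
        by (simp add: matrix_vector_mult_scaleR power2_eq_square)
      finally show ?thesis using False by (simp add: field_simps)
    qed
  qed
  then show ?thesis using pos by blast
qed


lemma M_inv:
  fixes A R :: "real^'n^'n"
  assumes "pos_def A" "psd R"
  shows "invertible (A + R)"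
proof -
  have "\<forall>x. (A + R) *v x = 0 \<longrightarrow> x = 0"
  proof (intro allI impI)
    fix x assume h: "(A + R) *v x = 0"
    have "x \<bullet> ((A + R) *v x) = x \<bullet> (A *v x) + x \<bullet> (R *v x)"
      by (simp add: matrix_vector_mult_add_rdistrib inner_add_right)
    moreover have "0 \<le> x \<bullet> (R *v x)" using assms(2) unfolding psd_def by blast
    ultimately have "x \<bullet> (A *v x) \<le> 0" using h by simp
    then show "x = 0" using assms(1) unfolding pos_def_def by force
  qed
  then show ?thesis
    using invertible_left_inverse matrix_left_invertible_ker by blast
qed

lemma Minv_bound:
  fixes A R :: "real^'n^'n"
  assumes mu: "\<mu> > 0" "\<forall>x. \<mu> * (norm x)^2 \<le> x \<bullet> (A *v x)"
    and R: "psd R" and inv: "invertible (A + R)"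
  shows "spec_norm (matrix_inv (A + R)) \<le> 1 / \<mu>"
  unfolding spec_norm_def
proof (rule onorm_le)
  fix y :: "real^'n"
  let ?x = "matrix_inv (A + R) *v y"
  have My: "(A + R) *v ?x = y"
    using inv_props[OF inv] by (simp add: matrix_vector_mul_assoc)
  have "\<mu> * (norm ?x)^2 \<le> ?x \<bullet> (A *v ?x)" using mu by blast
  also have "\<dots> \<le> ?x \<bullet> (A *v ?x) + ?x \<bullet> (R *v ?x)" using R unfolding psd_def by simp
  also have "\<dots> = ?x \<bullet> y"
    using My by (metis inner_add_right matrix_vector_mult_add_rdistrib)
  also have "\<dots> \<le> norm ?x * norm y" by (rule Cauchy_Schwarz_ineq2[THEN order_trans[OF abs_ge_self]])
  finally have h: "\<mu> * (norm ?x)^2 \<le> norm ?x * norm y" .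
  show "norm ?x \<le> 1 / \<mu> * norm y"
  proof (cases "?x = 0")
    case True then show ?thesis using mu by simp
  next
    case False
    then have "norm ?x > 0" by simp
    then have "\<mu> * norm ?x \<le> norm y" using h by (simp add: power2_eq_square)
    then show ?thesis using mu by (simp add: field_simps)
  qed
qed

lemma telescope:
  fixes F :: "real^'n^'n"
  shows "(mat 1 - F) ** (\<Sum>i\<in>{0..c}. mpow F i) = mat 1 - mpow F (Suc c)"
proof (induction c)
  case 0 then show ?case by (simp add: mm_sub_r)
next
  case (Suc c)
  have "(mat 1 - F) ** (\<Sum>i\<in>{0..Suc c}. mpow F i)
      = (mat 1 - F) ** (\<Sum>i\<in>{0..c}. mpow F i) + (mat 1 - F) ** mpow F (Suc c)"
    by (simp add: matrix_add_ldistrib)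
  also have "\<dots> = mat 1 - mpow F (Suc (Suc c))"
    using Suc by (simp add: mm_sub_r)
  finally show ?case .
qed

lemma err_formula:
  fixes A R :: "real^'n^'n"
  assumes iA: "invertible A" and iM: "invertible (A + R)"
  shows "matrix_inv (A + R) ** (\<Sum>i\<in>{0..c}. mpow (R ** matrix_inv (A + R)) i)
       = matrix_inv A ** (mat 1 - mpow (R ** matrix_inv (A + R)) (Suc c))"
proof -
  let ?Mi = "matrix_inv (A + R)"
  let ?F = "R ** ?Mi"
  let ?S = "\<Sum>i\<in>{0..c}. mpow ?F i"
  have "A ** ?Mi + ?F = mat 1"
    using inv_props[OF iM] by (simp add: mm_add_r)
  then have AM: "A ** ?Mi = mat 1 - ?F" by (simp add: algebra_simps)
  have "matrix_inv A ** (mat 1 - mpow ?F (Suc c)) = matrix_inv A ** ((A ** ?Mi) ** ?S)"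
    using telescope[of ?F c] AM by simp
  also have "\<dots> = (matrix_inv A ** A) ** ?Mi ** ?S" by (simp add: matrix_mul_assoc)
  also have "\<dots> = ?Mi ** ?S" using inv_props[OF iA] by simp
  finally show ?thesis by simp
qed


lemma contraction:
  fixes A R :: "real^'n^'n"
  assumes mu: "\<mu> > 0" "\<forall>x. \<mu> * (norm x)^2 \<le> x \<bullet> (A *v x)"
    and symA: "transpose A = A" and R: "psd R" and inv: "invertible (A + R)"
  shows "\<exists>C r. 0 \<le> r \<and> r < 1 \<and> (\<forall>k. spec_norm (mpow (matrix_inv (A + R) ** R) k) \<le> C * r ^ k)"
proof -
  define M where "M = A + R"
  define T where "T = matrix_inv M ** R"
  define P where "P = (\<lambda>x::real^'n. x \<bullet> (M *v x))"
  define L where "L = max (spec_norm M) \<mu>"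
  define q where "q = 1 - \<mu> / L"
  have symR: "transpose R = R" and Rpos: "\<And>x. 0 \<le> x \<bullet> (R *v x)" using R unfolding psd_def by auto
  have Lpos: "L > 0" "\<mu> \<le> L" using mu unfolding L_def by auto
  have q: "0 \<le> q" "q < 1" using Lpos mu unfolding q_def by (auto simp: field_simps)
  have Pdec: "P x = x \<bullet> (A *v x) + x \<bullet> (R *v x)" for x
    unfolding P_def M_def by (simp add: matrix_vector_mult_add_rdistrib inner_add_right)
  have Pge: "\<mu> * (norm x)^2 \<le> P x" for x using mu(2)[rule_format, of x] Rpos[of x] Pdec[of x] by linarith
  have Ple: "P x \<le> L * (norm x)^2" for x
  proof -
    have "P x \<le> norm x * norm (M *v x)" unfolding P_def
      by (rule Cauchy_Schwarz_ineq2[THEN order_trans[OF abs_ge_self]])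
    also have "\<dots> \<le> norm x * (spec_norm M * norm x)" by (simp add: mult_left_mono sn_vec)
    also have "\<dots> \<le> norm x * (L * norm x)"
      by (intro mult_left_mono mult_right_mono) (auto simp: L_def)
    finally show ?thesis by (simp add: power2_eq_square mult_ac)
  qed
  have MT: "M *v (T *v x) = R *v x" for x
    using inv_props[OF inv] unfolding T_def M_def by (simp add: matrix_vector_mul_assoc matrix_mul_assoc)
  have step: "P (T *v x) \<le> q * P x" for x
  proof -
    define y where "y = T *v x"
    have My: "M *v y = R *v x" using MT y_def by simp
    have "0 \<le> (x - y) \<bullet> (R *v (x - y))" by (rule Rpos)
    also have "\<dots> = x \<bullet> (R *v x) - x \<bullet> (R *v y) - y \<bullet> (R *v x) + y \<bullet> (R *v y)"
      by (simp add: matrix_vector_mult_diff_distrib inner_diff_left inner_diff_right)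
    also have "x \<bullet> (R *v y) = y \<bullet> (R *v x)" by (rule sym_inner[OF symR])
    also have "y \<bullet> (R *v x) = P y" unfolding P_def using My by simp
    finally have "0 \<le> x \<bullet> (R *v x) - 2 * P y + y \<bullet> (R *v y)" by simp
    moreover have "y \<bullet> (R *v y) \<le> P y"
    proof -
      have "0 \<le> \<mu> * (norm y)^2" using mu(1) by simp
      then show ?thesis using Pdec[of y] mu(2)[rule_format, of y] by linarith
    qed
    ultimately have "P y \<le> x \<bullet> (R *v x)" by simp
    also have "x \<bullet> (R *v x) = P x - x \<bullet> (A *v x)" using Pdec[of x] by simp
    also have "\<dots> \<le> P x - \<mu> * (norm x)^2" using mu(2) by simp
    also have "\<dots> \<le> P x - \<mu> / L * P x"
    proof -
      have "\<mu> / L * P x \<le> \<mu> / L * (L * (norm x)^2)"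
        using Ple[of x] mu(1) Lpos by (intro mult_left_mono) auto
      also have "\<dots> = \<mu> * (norm x)^2" using Lpos by simp
      finally show ?thesis by simp
    qed
    also have "\<dots> = q * P x" unfolding q_def by (simp add: algebra_simps)
    finally show ?thesis unfolding y_def .
  qed
  have iter: "P (mpow T k *v x) \<le> q ^ k * P x" for k x
  proof (induction k)
    case 0 then show ?case by simp
  next
    case (Suc k)
    have "P (mpow T (Suc k) *v x) = P (T *v (mpow T k *v x))"
      by (simp add: matrix_vector_mul_assoc)
    also have "\<dots> \<le> q * P (mpow T k *v x)" by (rule step)
    also have "\<dots> \<le> q * (q ^ k * P x)" using Suc q by (intro mult_left_mono) auto
    finally show ?case by simp
  qed
  define C where "C = sqrt (L / \<mu>)"
  have bnd: "norm (mpow T k *v x) \<le> C * sqrt q ^ k * norm x" for k x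
  proof -
    let ?y = "mpow T k *v x"
    have "\<mu> * (norm ?y)^2 \<le> q ^ k * (L * (norm x)^2)"
      using Pge[of ?y] iter[of k x] Ple[of x] q
      by (meson mult_left_mono order_trans zero_le_power)
    then have "(norm ?y)^2 \<le> (L / \<mu>) * q ^ k * (norm x)^2"
      using mu(1) by (simp add: field_simps)
    also have "\<dots> = (C * sqrt q ^ k * norm x)^2"
    proof -
      have c2: "C^2 = L / \<mu>" unfolding C_def using Lpos mu(1) by simp
      have s2: "(sqrt q ^ k)^2 = q ^ k"
        by (metis power_mult_distrib q(1) real_sqrt_pow2 power_mult mult.commute)
      show ?thesis by (simp only: power_mult_distrib c2 s2)
    qed
    finally show ?thesis
      by (rule power2_le_imp_le) (use Lpos mu(1) q in \<open>auto simp: C_def\<close>)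
  qed
  have "\<forall>k. spec_norm (mpow T k) \<le> C * sqrt q ^ k"
    unfolding spec_norm_def using bnd by (intro allI onorm_le) blast
  moreover have "0 \<le> sqrt q" "sqrt q < 1" using q by auto
  ultimately show ?thesis unfolding T_def M_def by blast
qed


lemma sn_mult3: "spec_norm ((X::real^'n^'m) ** (Y::real^'p^'n) ** (Z::real^'k^'p))
    \<le> spec_norm X * spec_norm Y * spec_norm Z"
proof -
  have "spec_norm (X ** Y ** Z) \<le> spec_norm (X ** Y) * spec_norm Z" by (rule sn_mult)
  also have "\<dots> \<le> spec_norm X * spec_norm Y * spec_norm Z"
    by (intro mult_right_mono sn_mult sn_nonneg)
  finally show ?thesis .
qed

lemma ev_within: "(\<forall>x\<in>S. P x) \<Longrightarrow> eventually P (at a within S)"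
  by (auto simp: eventually_at_filter intro: always_eventually)

lemma mpow_conj:
  fixes M Mi T :: "real^'n^'n"
  assumes "Mi ** M = mat 1"
  shows "mpow (M ** T ** Mi) k = (if k = 0 then mat 1 else M ** mpow T k ** Mi)"
proof (induction k)
  case 0 then show ?case by simp
next
  case (Suc k)
  show ?case
  proof (cases k)
    case 0 then show ?thesis by simp
  next
    case (Suc j)
    have "mpow (M ** T ** Mi) (Suc k) = (M ** T ** Mi) ** (M ** mpow T k ** Mi)"
      using Suc.IH Suc by simp
    also have "\<dots> = M ** T ** (Mi ** M) ** mpow T k ** Mi" by (simp add: matrix_mul_assoc)
    also have "\<dots> = M ** mpow T (Suc k) ** Mi" using assms by (simp add: matrix_mul_assoc)
    finally show ?thesis by simp
  qed
qed

theorem theorem1: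
  fixes H :: "real^'n^'N" and Y :: "real^'k^'N"
  assumes "pos_def (transpose H ** H)"
  shows "(\<forall>c::nat. ((\<lambda>R. spec_norm (beta_hr H Y R c - beta_opt H Y)) \<longlongrightarrow> 0)
            (at 0 within {R. psd R}))
       \<and> ((\<lambda>R. spec_norm (matrix_inv (transpose H ** H + R) ** Fmat H R ** (transpose H ** Y)))
            \<longlongrightarrow> 0) (at 0 within {R. psd R})
       \<and> (\<forall>R. psd R \<and> spectral_radius (Fmat H R) < 1 \<longrightarrow>
            (\<lambda>c. spec_norm (beta_hr H Y R c - beta_opt H Y)) \<longlonglongrightarrow> 0)"
proof -
  define A where "A = transpose H ** H"
  define B where "B = transpose H ** Y"
  have pA: "pos_def A" using assms A_def by simp
  have symA: "transpose A = A" using pA unfolding pos_def_def by blast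
  have psd0: "psd (0::real^'n^'n)" unfolding psd_def by (simp add: transpose_def vec_eq_iff)
  have iA: "invertible A" using M_inv[OF pA psd0] by simp
  obtain \<mu> where mu: "\<mu> > 0" "\<forall>x. \<mu> * (norm x)^2 \<le> x \<bullet> (A *v x)"
    using posdef_bound[OF pA] by blast
  define g where "g = (\<lambda>R::real^'n^'n. \<Sum>i\<in>UNIV. \<Sum>j\<in>UNIV. \<bar>R $ i $ j\<bar>)"
  have gR: "spec_norm R \<le> g R" for R unfolding g_def by (rule sn_sum)
  have Fdef: "Fmat H R = R ** matrix_inv (A + R)" for R unfolding Fmat_def A_def by simp
  have err: "beta_hr H Y R c - beta_opt H Y = - (matrix_inv A ** mpow (Fmat H R) (Suc c) ** B)"
    if R: "psd R" for R c
  proof -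
    have iM: "invertible (A + R)" by (rule M_inv[OF pA R])
    have "beta_hr H Y R c = (matrix_inv (A + R) ** (\<Sum>i\<in>{0..c}. mpow (Fmat H R) i)) ** B"
      unfolding beta_hr_def A_def B_def by (simp add: matrix_mul_assoc)
    also have "\<dots> = matrix_inv A ** (mat 1 - mpow (Fmat H R) (Suc c)) ** B"
      unfolding Fdef by (simp only: err_formula[OF iA iM])
    also have "\<dots> = matrix_inv A ** B - matrix_inv A ** mpow (Fmat H R) (Suc c) ** B"
      by (simp add: mm_sub_l mm_sub_r)
    finally show ?thesis unfolding beta_opt_def A_def B_def by simp
  qed
  have Fbound: "spec_norm (Fmat H R) \<le> g R / \<mu>" if R: "psd R" for R
  proof -
    have "spec_norm (Fmat H R) \<le> spec_norm R * spec_norm (matrix_inv (A + R))"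
      unfolding Fdef by (rule sn_mult)
    also have "\<dots> \<le> g R * (1 / \<mu>)"
      by (intro mult_mono gR Minv_bound[OF mu R M_inv[OF pA R]] sn_nonneg)
        (use sn_nonneg[of R] gR[of R] in linarith)
    finally show ?thesis by simp
  qed
  have gnn: "0 \<le> g R" for R unfolding g_def by (intro sum_nonneg) auto
  have glim: "(g \<longlongrightarrow> 0) (at 0 within {R. psd R})"
  proof -
    have "(g \<longlongrightarrow> g 0) (at 0 within {R. psd R})"
      unfolding g_def by (intro tendsto_intros)
    then show ?thesis unfolding g_def by simp
  qed
  have P1: "((\<lambda>R. spec_norm (beta_hr H Y R c - beta_opt H Y)) \<longlongrightarrow> 0)
            (at 0 within {R. psd R})" for c
  proof (rule tendsto_sandwich)
    show "\<forall>\<^sub>F R in at 0 within {R. psd R}. 0 \<le> spec_norm (beta_hr H Y R c - beta_opt H Y)"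
      by (intro always_eventually allI sn_nonneg)
    show "\<forall>\<^sub>F R in at 0 within {R. psd R}. spec_norm (beta_hr H Y R c - beta_opt H Y)
        \<le> spec_norm (matrix_inv A) * (g R / \<mu>) ^ Suc c * spec_norm B"
    proof (rule ev_within, safe)
      fix R :: "real^'n^'n" assume R: "psd R"
      have "spec_norm (beta_hr H Y R c - beta_opt H Y)
          = spec_norm (matrix_inv A ** mpow (Fmat H R) (Suc c) ** B)"
        using err[OF R] sn_uminus by metis
      also have "\<dots> \<le> spec_norm (matrix_inv A) * spec_norm (mpow (Fmat H R) (Suc c)) * spec_norm B"
        by (rule sn_mult3)
      also have "\<dots> \<le> spec_norm (matrix_inv A) * (g R / \<mu>) ^ Suc c * spec_norm B"
        using sn_mpow[of "Fmat H R" "Suc c"] power_mono[OF Fbound[OF R] sn_nonneg, of "Suc c"]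
        by (intro mult_right_mono mult_left_mono sn_nonneg) auto
      finally show "spec_norm (beta_hr H Y R c - beta_opt H Y)
        \<le> spec_norm (matrix_inv A) * (g R / \<mu>) ^ Suc c * spec_norm B" .
    qed
    show "((\<lambda>R. 0::real) \<longlongrightarrow> 0) (at 0 within {R. psd R})" by simp
    show "((\<lambda>R. spec_norm (matrix_inv A) * (g R / \<mu>) ^ Suc c * spec_norm B) \<longlongrightarrow> 0)
        (at 0 within {R. psd R})"
    proof -
      have L: "((\<lambda>R. spec_norm (matrix_inv A) * (g R / \<mu>) ^ Suc c * spec_norm B) \<longlongrightarrow>
          spec_norm (matrix_inv A) * (0 / \<mu>) ^ Suc c * spec_norm B) (at 0 within {R. psd R})"
        by (intro tendsto_mult tendsto_const tendsto_power tendsto_divide glim) (use mu(1) in simp)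
      have z: "spec_norm (matrix_inv A) * (0 / \<mu>) ^ Suc c * spec_norm B = 0" by simp
      show ?thesis using L unfolding z .
    qed
  qed
  have P2: "((\<lambda>R. spec_norm (matrix_inv (A + R) ** Fmat H R ** B)) \<longlongrightarrow> 0)
            (at 0 within {R. psd R})"
  proof (rule tendsto_sandwich)
    show "\<forall>\<^sub>F R in at 0 within {R. psd R}. 0 \<le> spec_norm (matrix_inv (A + R) ** Fmat H R ** B)"
      by (intro always_eventually allI sn_nonneg)
    show "\<forall>\<^sub>F R in at 0 within {R. psd R}. spec_norm (matrix_inv (A + R) ** Fmat H R ** B)
        \<le> (1 / \<mu>) * (g R / \<mu>) * spec_norm B"
    proof (rule ev_within, safe)
      fix R :: "real^'n^'n" assume R: "psd R"
      have "spec_norm (matrix_inv (A + R) ** Fmat H R ** B)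
          \<le> spec_norm (matrix_inv (A + R)) * spec_norm (Fmat H R) * spec_norm B"
        by (rule sn_mult3)
      also have "\<dots> \<le> (1 / \<mu>) * (g R / \<mu>) * spec_norm B"
        by (intro mult_right_mono mult_mono Minv_bound[OF mu R M_inv[OF pA R]] Fbound[OF R] sn_nonneg)
          (use mu(1) in simp)
      finally show "spec_norm (matrix_inv (A + R) ** Fmat H R ** B)
        \<le> (1 / \<mu>) * (g R / \<mu>) * spec_norm B" .
    qed
    show "((\<lambda>R. 0::real) \<longlongrightarrow> 0) (at 0 within {R. psd R})" by simp
    show "((\<lambda>R. (1 / \<mu>) * (g R / \<mu>) * spec_norm B) \<longlongrightarrow> 0) (at 0 within {R. psd R})"
    proof -
      have L: "((\<lambda>R. (1 / \<mu>) * (g R / \<mu>) * spec_norm B) \<longlongrightarrow>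
          (1 / \<mu>) * (0 / \<mu>) * spec_norm B) (at 0 within {R. psd R})"
        by (intro tendsto_mult tendsto_const tendsto_divide glim) (use mu(1) in simp)
      have z: "(1 / \<mu>) * (0 / \<mu>) * spec_norm B = 0" by simp
      show ?thesis using L unfolding z .
    qed
  qed
  have P3: "(\<lambda>c. spec_norm (beta_hr H Y R c - beta_opt H Y)) \<longlonglongrightarrow> 0" if R: "psd R" for R
  proof -
    have iM: "invertible (A + R)" by (rule M_inv[OF pA R])
    define M where "M = A + R"
    define Mi where "Mi = matrix_inv M"
    define T where "T = Mi ** R"
    obtain C r where Cr: "0 \<le> r" "r < 1" "\<forall>k. spec_norm (mpow T k) \<le> C * r ^ k"
      using contraction[OF mu symA R iM] unfolding T_def Mi_def M_def by blast
    have MiM: "Mi ** M = mat 1" "M ** Mi = mat 1" using inv_props[OF iM] unfolding Mi_def M_def by auto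
    have FT: "Fmat H R = M ** T ** Mi"
      unfolding Fdef T_def Mi_def M_def by (simp add: matrix_mul_assoc MiM[unfolded Mi_def M_def])
    define K where "K = spec_norm (matrix_inv A) * (spec_norm M * C * r * spec_norm Mi) * spec_norm B"
    show ?thesis
    proof (rule tendsto_sandwich)
      show "\<forall>\<^sub>F c in sequentially. 0 \<le> spec_norm (beta_hr H Y R c - beta_opt H Y)"
        by (intro always_eventually allI sn_nonneg)
      show "\<forall>\<^sub>F c in sequentially. spec_norm (beta_hr H Y R c - beta_opt H Y) \<le> K * r ^ c"
      proof (intro always_eventually allI)
        fix c
        have "spec_norm (beta_hr H Y R c - beta_opt H Y)
            = spec_norm (matrix_inv A ** mpow (Fmat H R) (Suc c) ** B)"
          using err[OF R] sn_uminus by metis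
        also have "\<dots> \<le> spec_norm (matrix_inv A) * spec_norm (mpow (Fmat H R) (Suc c)) * spec_norm B"
          by (rule sn_mult3)
        also have "spec_norm (mpow (Fmat H R) (Suc c)) \<le> spec_norm M * (C * r ^ Suc c) * spec_norm Mi"
        proof -
          have "spec_norm (mpow (Fmat H R) (Suc c)) = spec_norm (M ** mpow T (Suc c) ** Mi)"
            unfolding FT mpow_conj[OF MiM(1)] by simp
          also have "\<dots> \<le> spec_norm M * spec_norm (mpow T (Suc c)) * spec_norm Mi" by (rule sn_mult3)
          also have "\<dots> \<le> spec_norm M * (C * r ^ Suc c) * spec_norm Mi"
            using Cr(3)[rule_format, of "Suc c"] by (intro mult_right_mono mult_left_mono sn_nonneg) (simp_all del: mpow.simps power_Suc)
          finally show ?thesis .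
        qed
        then have "spec_norm (matrix_inv A) * spec_norm (mpow (Fmat H R) (Suc c)) * spec_norm B
            \<le> spec_norm (matrix_inv A) * (spec_norm M * (C * r ^ Suc c) * spec_norm Mi) * spec_norm B"
          by (intro mult_right_mono mult_left_mono sn_nonneg) auto
        also have "\<dots> = K * r ^ c" unfolding K_def by (simp add: algebra_simps)
        finally show "spec_norm (beta_hr H Y R c - beta_opt H Y) \<le> K * r ^ c" .
      qed
      show "(\<lambda>c. 0::real) \<longlonglongrightarrow> 0" by simp
      show "(\<lambda>c. K * r ^ c) \<longlonglongrightarrow> 0"
        by (rule tendsto_mult_right_zero[OF LIMSEQ_power_zero]) (use Cr in simp)
    qed
  qed
  show ?thesis using P1 P2 P3 unfolding A_def B_def by blast
qed

end
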